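(* Let $x\in V_\perp\oplus V_1$ be a point with properties (1) and (2) below, and set $\tilde x=(x_\perp,x_1,0)$: 1. for every $g\in\hat T$ with $(g\tilde x-\tilde x)_\perp=0$, we have $g|_{V_\perp}=I$; 2. for every $g\in\hat T$ with $(g\tilde x-\tilde x)_\perp=0$ and $(g\tilde x-\tilde x)_1=0$, we have $g|_{V_\perp}=I$ and $g|_{V_1}=I$. Then \[ \lim_{j\to\infty}\ \inf_{(g,a)\in\Gamma\setminus\Gamma_2}\|(g,a)(j\tilde x)-j\tilde x\|=\infty, \] where $j$ runs over the positive integers.
   Context: $E(n)$ is the Euclidean group, with elements $(g,a)$ acting by $(g,a)x=gx+a$, and $\psi(g,a)=g$. $\Gamma\subset E(n)$ is a discrete, fixed-point-free subgroup. $\Gamma^*$ is the intersection of $\Gamma$ with the identity component of the closure of $\Gamma\cdot\mathbb R^n$. By a theorem of Wolf: - $\Gamma^*$ is normal of finite index in $\Gamma$. - There exist a subspace $V\subset\mathbb R^n$ and a toral subgroup $T\subset O(n)$ such that $T$ acts trivially on $V$, $\Gamma^*\subset T\cdot V$, and $\Gamma^*$ is isomorphic to a discrete uniform subgroup of $V$. - $\hat T:=\overline{\psi(\Gamma)}$ is a finite extension of $T$. Let $\mathbb R^n=V_\perp\oplus V$ orthogonally. Define $\Gamma_1=\{(g,a)\in\Gamma: g|_{V_\perp}=I_{V_\perp}\}$ and $\Gamma^{**}=\Gamma^*\cap\Gamma_1$; its elements are pure translations by vectors in $V$. Let $V_2$ be the span of these translation vectors and $V_1=V\ominus V_2$, so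 that $\mathbb R^n=V_\perp\oplus V_1\oplus V_2$. Define \[ \Gamma_2=\{(g,a)\in\Gamma_1: g|_{V_1}=I_{V_1}\}. \] For $v\in\mathbb R^n$, $v_\perp$, $v_1$, $v_2$ denote its components in $V_\perp$, $V_1$, $V_2$. *)

theory Defs
  imports "HOL-Analysis.Analysis"
begin

text \<open>Elements of the Euclidean group E(n) are pairs (g,a) with g an orthogonal
  matrix and a a translation vector, acting by (g,a)x = g x + a.\<close>

type_synonym 'n euc = "(real^'n^'n) \<times> (real^'n)"

definition euc_act :: "'n::finite euc \<Rightarrow> real^'n \<Rightarrow> real^'n" where
  "euc_act \<gamma> x = fst \<gamma> *v x + snd \<gamma>"

definition euc_mult :: "'n::finite euc \<Rightarrow> 'n euc \<Rightarrow> 'n euc" where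
  "euc_mult \<gamma> \<delta> = (fst \<gamma> ** fst \<delta>, fst \<gamma> *v snd \<delta> + snd \<gamma>)"

definition euc_one :: "'n::finite euc" where
  "euc_one = (mat 1, 0)"

definition euc_inv :: "'n::finite euc \<Rightarrow> 'n euc" where
  "euc_inv \<gamma> = (transpose (fst \<gamma>), - (transpose (fst \<gamma>) *v snd \<gamma>))"

definition psi :: "'n::finite euc \<Rightarrow> real^'n^'n" where
  "psi \<gamma> = fst \<gamma>"

definition euc_subgroup :: "'n::finite euc set \<Rightarrow> bool" where
  "euc_subgroup G \<longleftrightarrow> (\<forall>\<gamma>\<in>G. orthogonal_matrix (fst \<gamma>)) \<and> euc_one \<in> G \<and>
     (\<forall>\<gamma>\<in>G. \<forall>\<delta>\<in>G. euc_mult \<gamma> \<delta> \<in> G) \<and> (\<forall>\<gamma>\<in>G. euc_inv \<gamma> \<in> G)"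

text \<open>Discrete: every element is isolated (topology of E(n) as a subspace of
  matrices times vectors).\<close>
definition discrete_set :: "'a::metric_space set \<Rightarrow> bool" where
  "discrete_set S \<longleftrightarrow> (\<forall>x\<in>S. \<exists>e>0. \<forall>y\<in>S. dist y x < e \<longrightarrow> y = x)"

definition fixed_point_free :: "'n::finite euc set \<Rightarrow> bool" where
  "fixed_point_free G \<longleftrightarrow> (\<forall>\<gamma>\<in>G. \<gamma> \<noteq> euc_one \<longrightarrow> (\<forall>y. euc_act \<gamma> y \<noteq> y))"

definition times_translations :: "'n::finite euc set \<Rightarrow> 'n euc set" where
  "times_translations G = {euc_mult \<gamma> (mat 1, v) | \<gamma> v. \<gamma> \<in> G}"

definition Gamma_star :: "'n::finite euc set \<Rightarrow> 'n euc set" where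
  "Gamma_star G = G \<inter> connected_component_set (closure (times_translations G)) euc_one"

definition That :: "'n::finite euc set \<Rightarrow> (real^'n^'n) set" where
  "That G = closure (psi ` G)"

definition toral_subgroup :: "(real^'n^'n::finite) set \<Rightarrow> bool" where
  "toral_subgroup T \<longleftrightarrow> (\<forall>t\<in>T. orthogonal_matrix t) \<and> mat 1 \<in> T \<and>
     (\<forall>s\<in>T. \<forall>t\<in>T. s ** t \<in> T) \<and> (\<forall>t\<in>T. transpose t \<in> T) \<and>
     (\<forall>s\<in>T. \<forall>t\<in>T. s ** t = t ** s) \<and> compact T \<and> connected T"

definition comp :: "(real^'n::finite) set \<Rightarrow> real^'n \<Rightarrow> real^'n" where
  "comp W v = (THE u. u \<in> W \<and> v - u \<in> orthogonal_comp W)"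

definition Vperp :: "(real^'n::finite) set \<Rightarrow> (real^'n) set" where
  "Vperp V = orthogonal_comp V"

definition Gamma1 :: "'n::finite euc set \<Rightarrow> (real^'n) set \<Rightarrow> 'n euc set" where
  "Gamma1 G V = {\<gamma> \<in> G. \<forall>v\<in>Vperp V. fst \<gamma> *v v = v}"

definition Gamma_sstar :: "'n::finite euc set \<Rightarrow> (real^'n) set \<Rightarrow> 'n euc set" where
  "Gamma_sstar G V = Gamma_star G \<inter> Gamma1 G V"

definition V2 :: "'n::finite euc set \<Rightarrow> (real^'n) set \<Rightarrow> (real^'n) set" where
  "V2 G V = span (snd ` Gamma_sstar G V)"

definition V1 :: "'n::finite euc set \<Rightarrow> (real^'n) set \<Rightarrow> (real^'n) set" where
  "V1 G V = V \<inter> orthogonal_comp (V2 G V)"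

definition Gamma2 :: "'n::finite euc set \<Rightarrow> (real^'n) set \<Rightarrow> 'n euc set" where
  "Gamma2 G V = {\<gamma> \<in> Gamma1 G V. \<forall>v\<in>V1 G V. fst \<gamma> *v v = v}"

end

theory Submission
  imports Defs
begin

declare transpose_matrix_vector[simp del]

lemma mv_neg: "(A::real^'n^'m) *v (- x) = - (A *v x)"
  by (metis diff_0 matrix_vector_mult_diff_distrib matrix_vector_mult_0_right)

lemma euc_act_mult: "euc_act (euc_mult a b) y = euc_act a (euc_act b y)"
  by (simp add: euc_act_def euc_mult_def matrix_vector_mul_assoc[symmetric] matrix_vector_right_distrib add.assoc)

lemma euc_mult_assoc: "euc_mult (euc_mult a b) c = euc_mult a (euc_mult b c)"
  by (simp add: euc_mult_def matrix_mul_assoc matrix_vector_mul_assoc[symmetric] matrix_vector_right_distrib add.assoc)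

lemma euc_mult_one [simp]: "euc_mult euc_one a = a" "euc_mult a euc_one = a"
  by (auto simp: euc_mult_def euc_one_def prod_eq_iff)

lemma euc_mult_inv:
  assumes "orthogonal_matrix (fst a)"
  shows "euc_mult a (euc_inv a) = euc_one" "euc_mult (euc_inv a) a = euc_one"
  using assms
  by (auto simp: euc_mult_def euc_inv_def euc_one_def orthogonal_matrix_def prod_eq_iff
      matrix_vector_mul_assoc mv_neg)

lemma euc_cancel:
  assumes "orthogonal_matrix (fst a)" "euc_mult a b = euc_mult a c"
  shows "b = c"
proof -
  have "euc_mult (euc_inv a) (euc_mult a b) = euc_mult (euc_inv a) (euc_mult a c)" using assms by simp
  then show ?thesis by (simp add: euc_mult_assoc[symmetric] euc_mult_inv[OF assms(1)])
qed

lemma orth_ot: "orthogonal_matrix Q \<Longrightarrow> orthogonal_transformation ((*v) (Q::real^'n^'n))"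
  by (simp add: orthogonal_transformation_matrix matrix_vector_mul_linear)

lemma orth_norm: "orthogonal_matrix Q \<Longrightarrow> norm ((Q::real^'n^'n) *v x) = norm x"
  using orth_ot orthogonal_transformation_norm by blast

lemma orth_inner: "orthogonal_matrix Q \<Longrightarrow> ((Q::real^'n^'n) *v x) \<bullet> (Q *v y) = x \<bullet> y"
  using orth_ot orthogonal_transformation_def by blast

lemma orth_tr_mult: "orthogonal_matrix Q \<Longrightarrow> transpose (Q::real^'n^'n) *v (Q *v x) = x"
  by (metis orthogonal_matrix_def matrix_vector_mul_assoc matrix_vector_mul_lid)

lemma orth_mult_tr: "orthogonal_matrix Q \<Longrightarrow> (Q::real^'n^'n) *v (transpose Q *v x) = x"
  by (metis orthogonal_matrix_def matrix_vector_mul_assoc matrix_vector_mul_lid)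

lemma orth_dist: "orthogonal_matrix Q \<Longrightarrow> norm ((Q::real^'n^'n) *v x - Q *v y) = norm (x - y)"
  by (metis orth_norm matrix_vector_mult_diff_distrib)

primrec epow :: "'n::finite euc \<Rightarrow> nat \<Rightarrow> 'n euc" where
  "epow g 0 = euc_one"
| "epow g (Suc i) = euc_mult g (epow g i)"

lemma epow_add: "epow g (i + m) = euc_mult (epow g i) (epow g m)"
  by (induction i) (simp_all add: euc_mult_assoc)

lemma epow_in: "euc_subgroup G \<Longrightarrow> g \<in> G \<Longrightarrow> epow g i \<in> G"
  by (induction i) (auto simp: euc_subgroup_def)

lemma subgroup_orth: "euc_subgroup G \<Longrightarrow> g \<in> G \<Longrightarrow> orthogonal_matrix (fst g)"
  by (auto simp: euc_subgroup_def)

lemma fst_epow_Suc: "fst (epow g (Suc i)) = fst g ** fst (epow g i)"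
  by (simp add: euc_mult_def)

lemma fst_epow_0: "fst (epow g 0) = mat 1"
  by (simp add: euc_one_def)

lemma euc_act_dist:
  "orthogonal_matrix (fst g) \<Longrightarrow> norm (euc_act g y - euc_act g z) = norm (y - z)"
  by (simp add: euc_act_def orth_dist)

lemma epow_disp:
  assumes "orthogonal_matrix (fst g)"
  shows "norm (euc_act (epow g r) p - p) \<le> real r * norm (euc_act g p - p)"
proof (induction r)
  case 0 then show ?case by (simp add: euc_act_def euc_one_def)
next
  case (Suc r)
  have "euc_act (epow g (Suc r)) p - p = (euc_act g (euc_act (epow g r) p) - euc_act g p) + (euc_act g p - p)"
    by (simp add: euc_act_mult)
  then have "norm (euc_act (epow g (Suc r)) p - p) \<le> norm (euc_act (epow g r) p - p) + norm (euc_act g p - p)"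
    by (metis euc_act_dist[OF assms] norm_triangle_ineq)
  with Suc show ?case by (simp add: algebra_simps)
qed



lemma comp_ex:
  fixes W :: "(real^'n) set"
  assumes "subspace W"
  shows "\<exists>u. u \<in> W \<and> y - u \<in> orthogonal_comp W"
proof -
  have "y \<in> W + orthogonal_comp W" using subspace_sum_orthogonal_comp[OF assms] by simp
  then obtain u z where "u \<in> W" "z \<in> orthogonal_comp W" "y = u + z"
    by (rule set_plus_elim)
  then show ?thesis by (intro exI[of _ u]) simp
qed

lemma comp_uniq:
  fixes W :: "(real^'n) set"
  assumes "subspace W" "u1 \<in> W" "y - u1 \<in> orthogonal_comp W" "u2 \<in> W" "y - u2 \<in> orthogonal_comp W"
  shows "u1 = u2"
proof -
  have "u1 - u2 \<in> W" by (rule subspace_diff[OF assms(1) assms(2) assms(4)])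
  moreover have e: "u1 - u2 = (y - u2) - (y - u1)" by simp
  have "(y - u2) - (y - u1) \<in> orthogonal_comp W"
    by (rule subspace_diff[OF subspace_orthogonal_comp assms(5) assms(3)])
  then have "u1 - u2 \<in> orthogonal_comp W" by (subst e)
  ultimately have "u1 - u2 \<in> W \<inter> orthogonal_comp W" by blast
  then have "u1 - u2 = 0" using orthogonal_Int_0[OF assms(1)] by blast
  then show ?thesis by simp
qed

lemma comp_char:
  assumes "subspace W"
  shows "comp W y \<in> W \<and> y - comp W y \<in> orthogonal_comp W"
  unfolding comp_def
  apply (rule theI')
  using comp_ex[OF assms] comp_uniq[OF assms] by blast

lemma comp_unique:
  assumes "subspace W" "u \<in> W" "y - u \<in> orthogonal_comp W"
  shows "comp W y = u"
  using comp_uniq[OF assms(1) _ _ assms(2,3)] comp_char[OF assms(1)] by blast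

lemma comp_lin:
  assumes W: "subspace W"
  shows "comp W (a *\<^sub>R y + b *\<^sub>R z) = a *\<^sub>R comp W y + b *\<^sub>R comp W z"
proof (rule comp_unique[OF W])
  have c1: "comp W y \<in> W" "y - comp W y \<in> orthogonal_comp W" using comp_char[OF W] by auto
  have c2: "comp W z \<in> W" "z - comp W z \<in> orthogonal_comp W" using comp_char[OF W] by auto
  show "a *\<^sub>R comp W y + b *\<^sub>R comp W z \<in> W"
    by (rule subspace_add[OF W subspace_scale[OF W c1(1)] subspace_scale[OF W c2(1)]])
  have "a *\<^sub>R y + b *\<^sub>R z - (a *\<^sub>R comp W y + b *\<^sub>R comp W z)
      = a *\<^sub>R (y - comp W y) + b *\<^sub>R (z - comp W z)" by (simp add: algebra_simps)
  moreover have "a *\<^sub>R (y - comp W y) + b *\<^sub>R (z - comp W z) \<in> orthogonal_comp W"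
    using subspace_orthogonal_comp[of W] c1(2) c2(2) by (meson subspace_add subspace_scale)
  ultimately show "a *\<^sub>R y + b *\<^sub>R z - (a *\<^sub>R comp W y + b *\<^sub>R comp W z) \<in> orthogonal_comp W"
    by metis
qed

lemma comp_add: "subspace W \<Longrightarrow> comp W (y + z) = comp W y + comp W z"
  using comp_lin[of W 1 y 1 z] by simp

lemma comp_scale: "subspace W \<Longrightarrow> comp W (a *\<^sub>R y) = a *\<^sub>R comp W y"
  using comp_lin[of W a y 0 y] by simp

lemma comp_diff: "subspace W \<Longrightarrow> comp W (y - z) = comp W y - comp W z"
  using comp_lin[of W 1 y "-1" z] by simp

lemma comp_perp: "subspace W \<Longrightarrow> y \<in> orthogonal_comp W \<Longrightarrow> comp W y = 0"
  by (rule comp_unique) (auto simp: subspace_0)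

lemma comp_norm:
  assumes W: "subspace W"
  shows "norm (comp W y) \<le> norm y"
proof -
  have c: "comp W y \<in> W" "y - comp W y \<in> orthogonal_comp W" using comp_char[OF W] by auto
  then have "orthogonal (comp W y) (y - comp W y)" by (simp add: orthogonal_comp_def)
  then have e: "(norm (comp W y + (y - comp W y)))\<^sup>2 = (norm (comp W y))\<^sup>2 + (norm (y - comp W y))\<^sup>2"
    by (rule norm_add_Pythagorean)
  have "comp W y + (y - comp W y) = y" by simp
  then have "(norm y)\<^sup>2 = (norm (comp W y))\<^sup>2 + (norm (y - comp W y))\<^sup>2" using e by metis
  moreover have "0 \<le> (norm (y - comp W y))\<^sup>2" by (rule zero_le_power2)
  ultimately have "(norm (comp W y))\<^sup>2 \<le> (norm y)\<^sup>2" by linarith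
  then show ?thesis by (rule power2_le_imp_le) simp
qed

lemma mat_eq_id:
  assumes "subspace V" "\<forall>v\<in>V. A *v v = v" "\<forall>u\<in>orthogonal_comp V. A *v u = u"
  shows "A = (mat 1 :: real^'n^'n)"
proof -
  have "A *v y = mat 1 *v y" for y
  proof -
    have "y \<in> V + orthogonal_comp V" using subspace_sum_orthogonal_comp[OF assms(1)] by simp
    then obtain v u where "v \<in> V" "u \<in> orthogonal_comp V" "y = v + u"
      by (rule set_plus_elim)
    then show ?thesis using assms by (simp add: matrix_vector_right_distrib)
  qed
  then show ?thesis by (simp add: matrix_eq)
qed

lemma orth_pres_perp:
  assumes "orthogonal_matrix s" "\<forall>v\<in>V. s *v v = v" "u \<in> orthogonal_comp V"
  shows "s *v u \<in> orthogonal_comp (V :: (real^'n) set)"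
  unfolding orthogonal_comp_def orthogonal_def
proof (intro CollectI ballI)
  fix y assume "y \<in> V"
  then have "y \<bullet> (s *v u) = (s *v y) \<bullet> (s *v u)" using assms by simp
  also have "\<dots> = y \<bullet> u" using orth_inner[OF assms(1)] by simp
  also have "\<dots> = 0" using assms(3) \<open>y \<in> V\<close> by (simp add: orthogonal_comp_def orthogonal_def)
  finally show "y \<bullet> (s *v u) = 0" .
qed

lemma orth_fix_perp_pres:
  assumes "orthogonal_matrix g" "subspace V" "\<forall>p\<in>orthogonal_comp V. g *v p = p" "v \<in> V"
  shows "g *v v \<in> (V :: (real^'n) set)"
proof -
  have "g *v v \<in> orthogonal_comp (orthogonal_comp V)"
    unfolding orthogonal_comp_def[of "orthogonal_comp V"] orthogonal_def
  proof (intro CollectI ballI)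
    fix p assume p: "p \<in> orthogonal_comp V"
    then have "p \<bullet> (g *v v) = (g *v p) \<bullet> (g *v v)" using assms by simp
    also have "\<dots> = p \<bullet> v" using orth_inner[OF assms(1)] by simp
    also have "\<dots> = 0"
    proof -
      have "v \<bullet> p = 0" using p assms(4) by (simp add: orthogonal_comp_def orthogonal_def)
      then show ?thesis by (simp add: inner_commute)
    qed
    finally show "p \<bullet> (g *v v) = 0" .
  qed
  then show ?thesis using orthogonal_comp_self[OF assms(2)] by simp
qed

lemma transl_bound:
  assumes "orthogonal_matrix t" "\<forall>v\<in>V. t *v v = v" "v \<in> V"
  shows "norm v \<le> norm (t *v y + v - (y::real^'n))"
proof -
  have tv: "t *v v = v" using assms by simp
  have "(t *v y - y) \<bullet> v = (t *v y) \<bullet> (t *v v) - y \<bullet> v" by (simp add: inner_diff_left tv)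
  also have "\<dots> = 0" using orth_inner[OF assms(1)] by simp
  finally have "orthogonal v (t *v y - y)" by (simp add: orthogonal_def inner_commute)
  then have e: "(norm (v + (t *v y - y)))\<^sup>2 = (norm v)\<^sup>2 + (norm (t *v y - y))\<^sup>2"
    by (rule norm_add_Pythagorean)
  have "v + (t *v y - y) = t *v y + v - y" by (simp add: algebra_simps)
  then have "(norm (t *v y + v - y))\<^sup>2 = (norm v)\<^sup>2 + (norm (t *v y - y))\<^sup>2" using e by metis
  moreover have "0 \<le> (norm (t *v y - y))\<^sup>2" by (rule zero_le_power2)
  ultimately have "(norm v)\<^sup>2 \<le> (norm (t *v y + v - y))\<^sup>2" by linarith
  then show ?thesis by (rule power2_le_imp_le) simp
qed

lemma unbounded_zero:
  assumes "\<forall>m::nat. \<exists>j::nat. j \<ge> m \<and> norm (real j *\<^sub>R c + v) \<le> B"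
  shows "c = (0::'a::real_normed_vector)"
proof (rule ccontr)
  assume "c \<noteq> 0"
  then have cp: "norm c > 0" by simp
  obtain m :: nat where m: "real m > (B + norm v) / norm c" using reals_Archimedean2 by blast
  obtain j where j: "j \<ge> m" "norm (real j *\<^sub>R c + v) \<le> B" using assms by blast
  have "real j * norm c \<ge> real m * norm c" using j cp by (simp add: mult_right_mono)
  moreover have "real m * norm c > B + norm v" using m cp by (simp add: field_simps)
  moreover have "norm (real j *\<^sub>R c) \<le> norm (real j *\<^sub>R c + v) + norm v"
    by (metis add_diff_cancel norm_triangle_ineq4)
  moreover have "norm (real j *\<^sub>R c) = real j * norm c" by simp
  ultimately show False using j by linarith
qed



lemma tendsto_mmult:
  fixes f g :: "'a \<Rightarrow> real^'n^'n"
  assumes "(f \<longlongrightarrow> A) F" "(g \<longlongrightarrow> B) F"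
  shows "((\<lambda>x. f x ** g x) \<longlongrightarrow> A ** B) F"
  unfolding matrix_matrix_mult_def
  by (intro tendsto_intros assms)

lemma tendsto_mvmult:
  fixes f :: "'a \<Rightarrow> real^'n^'n" and g :: "'a \<Rightarrow> real^'n"
  assumes "(f \<longlongrightarrow> A) F" "(g \<longlongrightarrow> b) F"
  shows "((\<lambda>x. f x *v g x) \<longlongrightarrow> A *v b) F"
  unfolding matrix_vector_mult_def
  by (intro tendsto_intros assms)

lemma tendsto_transp:
  fixes f :: "'a \<Rightarrow> real^'n^'n"
  assumes "(f \<longlongrightarrow> A) F"
  shows "((\<lambda>x. transpose (f x)) \<longlongrightarrow> transpose A) F"
  unfolding transpose_def
  by (intro tendsto_intros assms)

lemma tendsto_euc_mult:
  fixes f g :: "'a \<Rightarrow> 'n::finite euc"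
  assumes "(f \<longlongrightarrow> a) F" "(g \<longlongrightarrow> b) F"
  shows "((\<lambda>x. euc_mult (f x) (g x)) \<longlongrightarrow> euc_mult a b) F"
  unfolding euc_mult_def
  by (intro tendsto_Pair tendsto_mmult tendsto_mvmult tendsto_add tendsto_fst tendsto_snd assms)

lemma tendsto_euc_inv:
  fixes f :: "'a \<Rightarrow> 'n::finite euc"
  assumes "(f \<longlongrightarrow> a) F"
  shows "((\<lambda>x. euc_inv (f x)) \<longlongrightarrow> euc_inv a) F"
  unfolding euc_inv_def
  by (intro tendsto_Pair tendsto_mvmult tendsto_transp tendsto_minus tendsto_fst tendsto_snd assms)

lemma mv_bound:
  fixes A :: "real^'n^'n"
  shows "norm (A *v w) \<le> (\<Sum>i\<in>UNIV. \<Sum>j\<in>UNIV. \<bar>A $ i $ j\<bar>) * norm w"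
proof -
  have "norm (A *v w) \<le> onorm ((*v) A) * norm w" by (rule onorm) simp
  also have "\<dots> \<le> (\<Sum>i\<in>UNIV. \<Sum>j\<in>UNIV. \<bar>A $ i $ j\<bar>) * norm w"
    by (rule mult_right_mono[OF onorm_le_matrix_component_sum]) simp
  finally show ?thesis .
qed

lemma tendsto_csum:
  fixes f :: "nat \<Rightarrow> real^'n^'n"
  assumes "f \<longlonglongrightarrow> A"
  shows "(\<lambda>k. \<Sum>i\<in>UNIV. \<Sum>j\<in>UNIV. \<bar>(f k - A) $ i $ j\<bar>) \<longlonglongrightarrow> 0"
proof -
  have h: "(\<lambda>k. f k - A) \<longlonglongrightarrow> 0" using tendsto_diff[OF assms tendsto_const[of A]] by simp
  have "(\<lambda>k. \<Sum>i\<in>UNIV. \<Sum>j\<in>UNIV. \<bar>(f k - A) $ i $ j\<bar>) \<longlonglongrightarrow> (\<Sum>i\<in>UNIV. \<Sum>j\<in>UNIV. \<bar>(0::real^'n^'n) $ i $ j\<bar>)"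
    by (intro tendsto_sum tendsto_rabs tendsto_vec_nth h)
  then show ?thesis by simp
qed

lemma euc_inv_eq_one:
  assumes "orthogonal_matrix (fst a)" "euc_mult (euc_inv a) b = euc_one"
  shows "b = a"
proof -
  have "euc_mult a (euc_mult (euc_inv a) b) = a" using assms(2) by simp
  then show ?thesis by (simp add: euc_mult_assoc[symmetric] euc_mult_inv[OF assms(1)])
qed

lemma disc_bounded_finite:
  fixes G :: "'n::finite euc set"
  assumes grp: "euc_subgroup G" and disc: "discrete_set G" and S: "S \<subseteq> G" "bounded S"
  shows "finite S"
proof (rule ccontr)
  assume "infinite S"
  then obtain f :: "nat \<Rightarrow> 'n euc" where f: "inj f" "range f \<subseteq> S"
    using infinite_countable_subset by blast
  have "bounded (range f)" using f S bounded_subset by blast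
  then have "compact (closure (range f))" by simp
  then have "seq_compact (closure (range f))" by (rule compact_imp_seq_compact)
  then obtain l r where r: "strict_mono r" "((f \<circ> r) \<longlongrightarrow> l) sequentially"
    unfolding seq_compact_def using closure_subset by (metis image_subset_iff rangeI subsetD)
  define s where "s = f \<circ> r"
  have sG: "s n \<in> G" for n using f S s_def by auto
  have so: "orthogonal_matrix (fst (s n))" for n using sG grp subgroup_orth by blast
  have sl: "s \<longlonglongrightarrow> l" using r s_def by simp
  have sl': "(\<lambda>n. s (Suc n)) \<longlonglongrightarrow> l" using sl by (rule LIMSEQ_Suc)
  have u1: "(\<lambda>n. euc_mult (euc_inv (s n)) (s (Suc n))) \<longlonglongrightarrow> euc_mult (euc_inv l) l"
    by (intro tendsto_euc_mult tendsto_euc_inv sl sl')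
  have u2: "(\<lambda>n. euc_mult (euc_inv (s n)) (s n)) \<longlonglongrightarrow> euc_mult (euc_inv l) l"
    by (intro tendsto_euc_mult tendsto_euc_inv sl)
  have "(\<lambda>n. euc_mult (euc_inv (s n)) (s n)) = (\<lambda>n. euc_one)"
    using euc_mult_inv(2)[OF so] by simp
  then have "euc_mult (euc_inv l) l = euc_one" using u2 LIMSEQ_unique tendsto_const by metis
  then have u: "(\<lambda>n. euc_mult (euc_inv (s n)) (s (Suc n))) \<longlonglongrightarrow> euc_one" using u1 by simp
  have oneG: "euc_one \<in> G" using grp by (simp add: euc_subgroup_def)
  obtain e where e: "e > 0" "\<forall>y\<in>G. dist y euc_one < e \<longrightarrow> y = euc_one"
    using disc oneG unfolding discrete_set_def by blast
  have "eventually (\<lambda>n. dist (euc_mult (euc_inv (s n)) (s (Suc n))) euc_one < e) sequentially"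
    using u e(1) by (rule tendstoD)
  then obtain N where "\<forall>n\<ge>N. dist (euc_mult (euc_inv (s n)) (s (Suc n))) euc_one < e"
    unfolding eventually_sequentially by blast
  then have n: "dist (euc_mult (euc_inv (s N)) (s (Suc N))) euc_one < e" by simp
  define n where "n = N"
  have n': "dist (euc_mult (euc_inv (s n)) (s (Suc n))) euc_one < e" using n n_def by simp
  have "euc_mult (euc_inv (s n)) (s (Suc n)) \<in> G"
    using grp sG by (simp add: euc_subgroup_def)
  then have "euc_mult (euc_inv (s n)) (s (Suc n)) = euc_one" using e n' by blast
  then have "s (Suc n) = s n" by (rule euc_inv_eq_one[OF so])
  moreover have "inj s" unfolding s_def using f(1) r(1) by (simp add: inj_compose strict_mono_imp_inj_on)
  ultimately show False by (metis inj_eq n_not_Suc_n)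
qed

lemma FO:
  fixes g :: "real^'n^'n" and G :: "nat \<Rightarrow> real^'n^'n"
  assumes og: "orthogonal_matrix g" and G0: "G 0 = mat 1" and GS: "\<And>i. G (Suc i) = g ** G i"
    and Gr: "G r = mat 1" and r: "r \<ge> 1"
    and c: "norm (g *v (g *v u - u) - (g *v u - u)) \<le> c * norm (g *v u - u)" and cr: "c * real r < 1"
  shows "g *v u = u"
proof -
  define w where "w = g *v u - u"
  have comm: "G i ** g = G (Suc i)" for i
  proof (induction i)
    case 0 then show ?case by (simp add: G0 GS)
  next
    case (Suc i)
    have "G (Suc i) ** g = (g ** G i) ** g" by (simp add: GS)
    also have "\<dots> = g ** (G i ** g)" by (simp add: matrix_mul_assoc)
    also have "\<dots> = g ** G (Suc i)" using Suc by simp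
    also have "\<dots> = G (Suc (Suc i))" by (simp add: GS)
    finally show ?case .
  qed
  have cw: "norm (g *v w - w) \<le> c * norm w" using c by (simp add: w_def)
  have tel: "(\<Sum>i<r. G i *v w) = G r *v u - G 0 *v u"
  proof -
    have "G i *v w = G (Suc i) *v u - G i *v u" for i
      by (simp add: w_def matrix_vector_mult_diff_distrib matrix_vector_mul_assoc comm)
    then have "(\<Sum>i<r. G i *v w) = (\<Sum>i<r. G (Suc i) *v u - G i *v u)" by simp
    also have "\<dots> = G r *v u - G 0 *v u" by (rule sum_lessThan_telescope)
    finally show ?thesis .
  qed
  then have s0: "(\<Sum>i<r. G i *v w) = 0" using G0 Gr by simp
  have bd: "norm (G i *v w - w) \<le> real i * (c * norm w)" for i
  proof (induction i)
    case 0 then show ?case by (simp add: G0)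
  next
    case (Suc i)
    have "G (Suc i) *v w - w = (g *v (G i *v w) - g *v w) + (g *v w - w)"
      by (simp add: GS matrix_vector_mul_assoc)
    then have "norm (G (Suc i) *v w - w) \<le> norm (g *v (G i *v w) - g *v w) + norm (g *v w - w)"
      by (metis norm_triangle_ineq)
    also have "norm (g *v (G i *v w) - g *v w) = norm (G i *v w - w)" by (rule orth_dist[OF og])
    finally have "norm (G (Suc i) *v w - w) \<le> norm (G i *v w - w) + norm (g *v w - w)" .
    moreover have "real (Suc i) * (c * norm w) = real i * (c * norm w) + c * norm w"
      by (simp add: algebra_simps)
    ultimately show ?case using Suc.IH cw by linarith
  qed
  have e1: "(\<Sum>i<r. w - G i *v w) = (\<Sum>i<r. w)" using s0 by (simp add: sum_subtractf)
  have e2: "(\<Sum>i<r. w) = real r *\<^sub>R w" by (subst sum_constant_scaleR) simp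
  have "real r *\<^sub>R w = (\<Sum>i<r. w - G i *v w)" using e1 e2 by simp
  then have "norm (real r *\<^sub>R w) \<le> (\<Sum>i<r. norm (w - G i *v w))"
    by (metis norm_sum)
  also have "\<dots> \<le> (\<Sum>i<r. real r * (c * norm w))"
  proof (rule sum_mono)
    fix i assume "i \<in> {..<r}"
    then have "real i \<le> real r" by simp
    have cn: "0 \<le> c * norm w"
    proof -
      have "0 \<le> norm (g *v w - w)" by simp
      then show ?thesis using cw by linarith
    qed
    have "norm (w - G i *v w) = norm (G i *v w - w)" by (rule norm_minus_commute)
    also have "\<dots> \<le> real i * (c * norm w)" by (rule bd)
    also have "\<dots> \<le> real r * (c * norm w)" using \<open>real i \<le> real r\<close> cn by (rule mult_right_mono)
    finally show "norm (w - G i *v w) \<le> real r * (c * norm w)" .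
  qed
  also have "\<dots> = real r * (real r * c * norm w)" by simp
  finally have "real r * norm w \<le> real r * (real r * c * norm w)" by simp
  then have "norm w \<le> real r * c * norm w" using r by simp
  then have "norm w * (1 - c * real r) \<le> 0" by (simp add: algebra_simps)
  moreover have "1 - c * real r > 0" using cr by simp
  ultimately have "norm w \<le> 0" by (simp add: mult_le_0_iff)
  then show ?thesis using w_def by simp
qed



lemma pow_in_sub:
  fixes G H :: "'n::finite euc set"
  assumes grp: "euc_subgroup G" and fin: "finite ((\<lambda>\<gamma>. (\<lambda>\<delta>. euc_mult \<gamma> \<delta>) ` H) ` G)"
    and one: "euc_one \<in> H" and g: "g \<in> G"
  shows "\<exists>r. 1 \<le> r \<and> r \<le> card ((\<lambda>\<gamma>. (\<lambda>\<delta>. euc_mult \<gamma> \<delta>) ` H) ` G) \<and> epow g r \<in> H"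
proof -
  define C where "C = (\<lambda>\<gamma>. (\<lambda>\<delta>. euc_mult \<gamma> \<delta>) ` H)"
  define N where "N = card (C ` G)"
  define f where "f i = C (epow g i)" for i
  have sub: "f ` {0..N} \<subseteq> C ` G" using epow_in[OF grp g] f_def by auto
  have "card (f ` {0..N}) \<le> N" using card_mono[OF fin[folded C_def] sub] N_def by simp
  then have "card (f ` {0..N}) < card {0..N}" by simp
  then have "\<not> inj_on f {0..N}" by (rule pigeonhole)
  then obtain i i' where ii: "i \<in> {0..N}" "i' \<in> {0..N}" "i \<noteq> i'" "f i = f i'"
    unfolding inj_on_def by blast
  have key: "\<exists>r. 1 \<le> r \<and> r \<le> N \<and> epow g r \<in> H" if ab: "f a = f b" "a < b" "b \<le> N" for a b
  proof -
    have "epow g b = euc_mult (epow g b) euc_one" by simp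
    then have "epow g b \<in> f b" using one unfolding f_def C_def by (metis image_eqI)
    then have "epow g b \<in> f a" using ab by simp
    then obtain \<delta> where d: "\<delta> \<in> H" "epow g b = euc_mult (epow g a) \<delta>" unfolding f_def C_def by auto
    have "epow g b = euc_mult (epow g a) (epow g (b - a))" using epow_add[of g a "b - a"] ab by simp
    then have "\<delta> = epow g (b - a)"
      using d euc_cancel[OF subgroup_orth[OF grp epow_in[OF grp g]]] by metis
    then show ?thesis using d ab by (intro exI[of _ "b - a"]) auto
  qed
  have "\<exists>r. 1 \<le> r \<and> r \<le> N \<and> epow g r \<in> H"
  proof (cases "i < i'")
    case True then show ?thesis using key[of i i'] ii by auto
  next
    case False then have "i' < i" using ii(3) by simp
    then show ?thesis using key[of i' i] ii by auto
  qed
  then show ?thesis unfolding N_def C_def .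
qed

lemma disp_formula:
  "euc_act \<gamma> (real j *\<^sub>R x) - real j *\<^sub>R x = real j *\<^sub>R (fst \<gamma> *v x - x) + snd \<gamma>"
  by (simp add: euc_act_def matrix_vector_mult_scaleR algebra_simps)



lemma main_lemma:
  fixes \<Gamma> :: "'n::finite euc set" and V :: "(real^'n) set" and T :: "(real^'n^'n) set"
    and x :: "real^'n"
  assumes grp: "euc_subgroup \<Gamma>"
    and disc: "discrete_set \<Gamma>"
    and V_sub: "subspace V"
    and T_toral: "toral_subgroup T"
    and T_triv: "\<forall>t\<in>T. \<forall>v\<in>V. t *v v = v"
    and star_sub: "Gamma_star \<Gamma> \<subseteq> {(t, v). t \<in> T \<and> v \<in> V}"
    and star_normal: "\<forall>\<gamma>\<in>\<Gamma>. \<forall>\<delta>\<in>Gamma_star \<Gamma>. euc_mult (euc_mult \<gamma> \<delta>) (euc_inv \<gamma>) \<in> Gamma_star \<Gamma>"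
    and star_index: "finite ((\<lambda>\<gamma>. (\<lambda>\<delta>. euc_mult \<gamma> \<delta>) ` Gamma_star \<Gamma>) ` \<Gamma>)"
    and T_in_That: "T \<subseteq> That \<Gamma>"
    and x_in: "x \<in> {u + w | u w. u \<in> Vperp V \<and> w \<in> V1 \<Gamma> V}"
    and prop1: "\<forall>g\<in>That \<Gamma>. comp (Vperp V) (g *v x - x) = 0 \<longrightarrow>
                  (\<forall>v\<in>Vperp V. g *v v = v)"
    and prop2: "\<forall>g\<in>That \<Gamma>. comp (Vperp V) (g *v x - x) = 0 \<and> comp (V1 \<Gamma> V) (g *v x - x) = 0 \<longrightarrow>
                  (\<forall>v\<in>Vperp V. g *v v = v) \<and> (\<forall>v\<in>V1 \<Gamma> V. g *v v = v)"
  shows "\<forall>M. \<exists>J. \<forall>j\<ge>J. \<forall>\<gamma>\<in>\<Gamma> - Gamma2 \<Gamma> V.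
             M < norm (euc_act \<gamma> (real j *\<^sub>R x) - real j *\<^sub>R x)"
proof (rule ccontr)
  define P where "P = Vperp V"
  define W1 where "W1 = V1 \<Gamma> V"
  define W2 where "W2 = V2 \<Gamma> V"
  define S where "S = Gamma_star \<Gamma>"
  have subP: "subspace P" unfolding P_def Vperp_def by (rule subspace_orthogonal_comp)
  have subW2: "subspace W2" unfolding W2_def V2_def by (rule subspace_span)
  have subW1: "subspace W1" unfolding W1_def V1_def
    by (rule subspace_inter[OF V_sub subspace_orthogonal_comp])
  have W1V: "W1 \<subseteq> V" unfolding W1_def V1_def by auto
  have W2W1: "comp W1 y = 0" if "y \<in> W2" for y
  proof (rule comp_perp[OF subW1])
    show "y \<in> orthogonal_comp W1"
      unfolding orthogonal_comp_def
    proof (intro CollectI ballI)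
      fix z assume "z \<in> W1"
      then have "z \<in> orthogonal_comp W2" unfolding W1_def V1_def W2_def by auto
      then show "orthogonal z y" using that unfolding orthogonal_comp_def
        by (auto simp: orthogonal_commute)
    qed
  qed
  have VP: "comp P v = 0" if "v \<in> V" for v
  proof (rule comp_perp[OF subP])
    show "v \<in> orthogonal_comp P" unfolding P_def Vperp_def using that orthogonal_comp_subset by blast
  qed
  have comp0: "comp W 0 = 0" if "subspace W" for W :: "(real^'n) set"
    by (rule comp_perp[OF that]) (simp add: subspace_0 subspace_orthogonal_comp)
  have oneG: "euc_one \<in> \<Gamma>" using grp by (simp add: euc_subgroup_def)
  have multG: "euc_mult a b \<in> \<Gamma>" if "a \<in> \<Gamma>" "b \<in> \<Gamma>" for a b
    using grp that by (simp add: euc_subgroup_def)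
  have invG: "euc_inv a \<in> \<Gamma>" if "a \<in> \<Gamma>" for a
    using grp that by (simp add: euc_subgroup_def)
  have orthG: "orthogonal_matrix (fst a)" if "a \<in> \<Gamma>" for a
    using grp that by (simp add: euc_subgroup_def)
  have SG: "S \<subseteq> \<Gamma>" unfolding S_def Gamma_star_def by auto
  have oneS: "euc_one \<in> S"
  proof -
    have "euc_one = euc_mult euc_one (mat 1, 0)" by (simp add: euc_mult_def euc_one_def)
    then have "euc_one \<in> times_translations \<Gamma>" unfolding times_translations_def using oneG by blast
    then have "euc_one \<in> closure (times_translations \<Gamma>)" using closure_subset by blast
    then show ?thesis unfolding S_def Gamma_star_def using oneG by auto
  qed
  have Sstr: "fst d \<in> T \<and> snd d \<in> V" if "d \<in> S" for d
    using star_sub that S_def by auto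
  have T_orth: "orthogonal_matrix t" if "t \<in> T" for t
    using T_toral that by (simp add: toral_subgroup_def)
  have T_tr: "transpose t \<in> T" if "t \<in> T" for t
    using T_toral that by (simp add: toral_subgroup_def)
  have Tid: "t = mat 1" if "t \<in> T" "\<forall>u\<in>P. t *v u = u" for t
    using mat_eq_id[OF V_sub] T_triv that unfolding P_def Vperp_def by blast
  have psiG: "fst a \<in> That \<Gamma>" if "a \<in> \<Gamma>" for a
    unfolding That_def psi_def using that closure_subset by fastforce
  assume "\<not> (\<forall>M. \<exists>J. \<forall>j\<ge>J. \<forall>\<gamma>\<in>\<Gamma> - Gamma2 \<Gamma> V.
             M < norm (euc_act \<gamma> (real j *\<^sub>R x) - real j *\<^sub>R x))"
  then obtain M where "\<forall>J. \<exists>j\<ge>J. \<exists>\<gamma>\<in>\<Gamma> - Gamma2 \<Gamma> V.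
             norm (euc_act \<gamma> (real j *\<^sub>R x) - real j *\<^sub>R x) \<le> M"
    by (auto simp: not_less)
  then obtain jj gg where jg: "\<And>k. jj k \<ge> k" "\<And>k. gg k \<in> \<Gamma> - Gamma2 \<Gamma> V"
    "\<And>k. norm (euc_act (gg k) (real (jj k) *\<^sub>R x) - real (jj k) *\<^sub>R x) \<le> M"
    by metis
  have ggG: "gg k \<in> \<Gamma>" for k using jg(2) by blast
  have M0: "0 \<le> M" using jg(3)[of 0] norm_ge_zero order_trans by blast
  define CC where "CC = (\<lambda>\<gamma>. (\<lambda>\<delta>. euc_mult \<gamma> \<delta>) ` S)"
  define N where "N = card (CC ` \<Gamma>)"
  have finCC: "finite (CC ` \<Gamma>)" using star_index unfolding CC_def S_def .
  define F where "F = {d \<in> S. norm (snd d) \<le> real N * M}"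
  have finF: "finite F"
  proof (rule disc_bounded_finite[OF grp disc])
    show "F \<subseteq> \<Gamma>" using SG F_def by auto
    have "F \<subseteq> T \<times> cball 0 (real N * M)" using Sstr unfolding F_def by (auto simp: mem_Times_iff)
    moreover have "bounded (T \<times> cball 0 (real N * M))" using T_toral
      by (intro bounded_Times compact_imp_bounded bounded_cball) (simp add: toral_subgroup_def)
    ultimately show "bounded F" using bounded_subset by blast
  qed
  have stepA: "\<exists>r. 1 \<le> r \<and> r \<le> N \<and> epow (gg k) r \<in> F" for k
  proof -
    obtain r where r: "1 \<le> r" "r \<le> N" "epow (gg k) r \<in> S"
      using pow_in_sub[OF grp star_index[folded S_def] oneS ggG[of k]] unfolding N_def CC_def by blast
    define d where "d = epow (gg k) r"
    define y where "y = real (jj k) *\<^sub>R x"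
    have dTV: "fst d \<in> T" "snd d \<in> V" using Sstr r(3) d_def by auto
    then have "norm (snd d) \<le> norm (fst d *v y + snd d - y)"
      using transl_bound[of "fst d" V "snd d" y] T_orth T_triv by blast
    also have "fst d *v y + snd d - y = euc_act d y - y" by (simp add: euc_act_def)
    also have "norm (euc_act d y - y) \<le> real r * norm (euc_act (gg k) y - y)"
      unfolding d_def by (rule epow_disp[OF orthG[OF ggG]])
    also have "\<dots> \<le> real r * M" using jg(3)[of k] y_def by (intro mult_left_mono) auto
    also have "\<dots> \<le> real N * M" using r(2) M0 by (intro mult_right_mono) auto
    finally show ?thesis using r d_def F_def by auto
  qed
  then obtain rr where rr: "\<And>k. 1 \<le> rr k \<and> rr k \<le> N \<and> epow (gg k) (rr k) \<in> F" by metis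
  define h where "h k = (rr k, epow (gg k) (rr k))" for k
  have "h ` UNIV \<subseteq> {1..N} \<times> F" using rr h_def by auto
  then have "finite (h ` UNIV)" using finF by (meson finite_SigmaI finite_atLeastAtMost finite_subset)
  then obtain rd where rdinf: "infinite (h -` {rd})" using inf_img_fin_domE infinite_UNIV_nat by metis
  define K1 where "K1 = h -` {rd}"
  obtain r d where rd: "rd = (r, d)" by (cases rd)
  have K1: "rr k = r" "epow (gg k) r = d" if "k \<in> K1" for k using that K1_def h_def rd by auto
  have K1inf: "infinite K1" using rdinf K1_def by simp
  obtain k0 where k0: "k0 \<in> K1" using K1inf by (metis ex_in_conv infinite_imp_nonempty)
  have r1: "1 \<le> r" "r \<le> N" using rr[of k0] K1[OF k0] by auto
  have dS: "d \<in> S" using rr[of k0] K1[OF k0] F_def by auto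
  have tx: "fst d *v x - x = 0"
  proof (rule unbounded_zero[where v = "snd d" and B = "real r * M"], intro allI)
    fix m
    obtain k where k: "k \<ge> m" "k \<in> K1" using K1inf infinite_nat_iff_unbounded_le by blast
    have "norm (real (jj k) *\<^sub>R (fst d *v x - x) + snd d)
        = norm (euc_act d (real (jj k) *\<^sub>R x) - real (jj k) *\<^sub>R x)" by (simp add: disp_formula)
    also have "\<dots> \<le> real r * norm (euc_act (gg k) (real (jj k) *\<^sub>R x) - real (jj k) *\<^sub>R x)"
      using epow_disp[OF orthG[OF ggG[of k]], of r] K1(2)[OF k(2)] by simp
    also have "\<dots> \<le> real r * M" using jg(3) by (intro mult_left_mono) auto
    finally show "\<exists>j\<ge>m. norm (real j *\<^sub>R (fst d *v x - x) + snd d) \<le> real r * M"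
      using jg(1)[of k] k by (intro exI[of _ "jj k"]) auto
  qed
  have tT: "fst d \<in> T" using Sstr dS by auto
  have "comp P (fst d *v x - x) = 0" using tx comp0[OF subP] by simp
  then have "\<forall>u\<in>P. fst d *v u = u" using prop1 T_in_That tT unfolding P_def by blast
  then have t1: "fst d = mat 1" using Tid tT by blast
  have powid: "fst (epow (gg k) r) = mat 1" if "k \<in> K1" for k using K1 that t1 by simp
  have "(\<lambda>k. CC (gg k)) ` K1 \<subseteq> CC ` \<Gamma>" using ggG by auto
  then have "finite ((\<lambda>k. CC (gg k)) ` K1)" using finCC finite_subset by blast
  then obtain C0 where C0: "infinite ((\<lambda>k. CC (gg k)) -` {C0} \<inter> K1)"
    using inf_img_fin_domE'[OF _ K1inf] by metis
  define K2 where "K2 = (\<lambda>k. CC (gg k)) -` {C0} \<inter> K1"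
  have K2inf: "infinite K2" using C0 K2_def by simp
  have K2K1: "k \<in> K1" if "k \<in> K2" for k using that K2_def by auto
  have K2C: "CC (gg k) = C0" if "k \<in> K2" for k using that K2_def by auto
  have coset: "\<exists>\<delta>\<in>S. gg k = euc_mult (gg l) \<delta>" if "k \<in> K2" "l \<in> K2" for k l
  proof -
    have "gg k = euc_mult (gg k) euc_one" by simp
    then have "gg k \<in> CC (gg k)" using oneS unfolding CC_def by (metis image_eqI)
    then have "gg k \<in> CC (gg l)" using K2C that by simp
    then show ?thesis unfolding CC_def by auto
  qed
  define \<sigma> where "\<sigma> = enumerate K2"
  have \<sigma>: "strict_mono \<sigma>" using K2inf \<sigma>_def strict_mono_enumerate by auto
  have \<sigma>K2: "\<sigma> n \<in> K2" for n using K2inf \<sigma>_def enumerate_in_set by auto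
  define l where "l = \<sigma> 0"
  have lK2: "l \<in> K2" using \<sigma>K2 l_def by simp
  obtain dd where dd: "\<And>k. k \<in> K2 \<Longrightarrow> dd k \<in> S \<and> gg k = euc_mult (gg l) (dd k)"
    using coset[OF _ lK2] by metis
  define tt where "tt n = fst (dd (\<sigma> n))" for n
  have ttT: "tt n \<in> T" for n using dd \<sigma>K2 Sstr tt_def by auto
  have "seq_compact T" using T_toral compact_imp_seq_compact by (auto simp: toral_subgroup_def)
  then obtain tinf \<rho> where tinf: "tinf \<in> T" "strict_mono \<rho>" "(tt \<circ> \<rho>) \<longlonglongrightarrow> tinf"
    unfolding seq_compact_def using ttT by metis
  define \<kappa> where "\<kappa> = \<sigma> \<circ> \<rho>"
  have \<kappa>: "strict_mono \<kappa>" unfolding \<kappa>_def by (rule strict_mono_o[OF \<sigma> tinf(2)])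
  have \<kappa>K2: "\<kappa> n \<in> K2" for n unfolding \<kappa>_def using \<sigma>K2 by simp
  have \<kappa>ge: "n \<le> \<kappa> n" for n by (rule seq_suble[OF \<kappa>])
  define gl where "gl = fst (gg l)"
  define al where "al = snd (gg l)"
  have glO: "orthogonal_matrix gl" using orthG ggG gl_def by blast
  have gk: "fst (gg (\<kappa> n)) = gl ** (tt \<circ> \<rho>) n" for n
    using dd[OF \<kappa>K2[of n]] by (simp add: euc_mult_def gl_def tt_def \<kappa>_def)
  define ginf where "ginf = gl ** tinf"
  have glim: "(\<lambda>n. fst (gg (\<kappa> n))) \<longlonglongrightarrow> ginf"
    unfolding gk ginf_def by (rule tendsto_mmult[OF tendsto_const tinf(3)])
  have ginfThat: "ginf \<in> That \<Gamma>"
    unfolding That_def closure_sequential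
    by (rule exI[of _ "\<lambda>n. fst (gg (\<kappa> n))"]) (use glim ggG in \<open>auto simp: psi_def\<close>)
  define B0 where "B0 = norm al"
  have compak: "norm (comp P (snd (gg k))) \<le> B0" if "k \<in> K2" for k
  proof -
    have "euc_mult (gg k) (euc_inv (gg l)) = euc_mult (euc_mult (gg l) (dd k)) (euc_inv (gg l))"
      using dd[OF that] by simp
    also have "\<dots> \<in> S" using star_normal ggG dd[OF that] S_def by auto
    finally have "snd (euc_mult (gg k) (euc_inv (gg l))) \<in> V" using Sstr by blast
    then have c0: "comp P (snd (euc_mult (gg k) (euc_inv (gg l)))) = 0" by (rule VP)
    have "snd (euc_mult (gg k) (euc_inv (gg l))) = snd (gg k) - fst (gg k) *v (transpose gl *v al)"
      by (simp add: euc_mult_def euc_inv_def gl_def al_def mv_neg)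
    then have "comp P (snd (gg k)) - comp P (fst (gg k) *v (transpose gl *v al)) = 0"
      using c0 comp_diff[OF subP] by metis
    then have "comp P (snd (gg k)) = comp P (fst (gg k) *v (transpose gl *v al))" by simp
    also have "norm \<dots> \<le> norm (fst (gg k) *v (transpose gl *v al))" by (rule comp_norm[OF subP])
    also have "\<dots> = B0"
      using orth_norm[OF orthG[OF ggG[of k]]] orth_norm[of "transpose gl"] glO B0_def by simp
    finally show ?thesis .
  qed
  have compbound: "real (jj k) * norm (comp P (fst (gg k) *v x - x)) \<le> M + B0" if "k \<in> K2" for k
  proof -
    define D where "D = euc_act (gg k) (real (jj k) *\<^sub>R x) - real (jj k) *\<^sub>R x"
    have "comp P D = real (jj k) *\<^sub>R comp P (fst (gg k) *v x - x) + comp P (snd (gg k))"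
      by (simp add: D_def disp_formula comp_add[OF subP] comp_scale[OF subP])
    then have "real (jj k) *\<^sub>R comp P (fst (gg k) *v x - x) = comp P D - comp P (snd (gg k))" by simp
    then have "norm (real (jj k) *\<^sub>R comp P (fst (gg k) *v x - x)) \<le> norm (comp P D) + norm (comp P (snd (gg k)))"
      by (metis norm_triangle_ineq4)
    moreover have "norm (comp P D) \<le> M"
    proof -
      have "norm D \<le> M" using jg(3)[of k] D_def by simp
      then show ?thesis using comp_norm[OF subP, of D] by linarith
    qed
    moreover note compak[OF that]
    ultimately show ?thesis by simp
  qed
  have cPinf: "comp P (ginf *v x - x) = 0"
  proof -
    define e where "e n = (M + B0) / real n + norm (fst (gg (\<kappa> n)) *v x - ginf *v x)" for n
    have "(\<lambda>n. (M + B0) / real n) \<longlonglongrightarrow> 0" by (rule lim_const_over_n)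
    moreover have "(\<lambda>n. norm (fst (gg (\<kappa> n)) *v x - ginf *v x)) \<longlonglongrightarrow> 0"
      by (intro tendsto_norm_zero LIM_zero tendsto_mvmult glim tendsto_const)
    ultimately have "(\<lambda>n. (M + B0) / real n + norm (fst (gg (\<kappa> n)) *v x - ginf *v x)) \<longlonglongrightarrow> 0 + 0"
      by (rule tendsto_add)
    then have elim: "e \<longlonglongrightarrow> 0" unfolding e_def by simp
    have "\<forall>n\<ge>1. norm (comp P (ginf *v x - x)) \<le> e n"
    proof (intro allI impI)
      fix n :: nat assume n: "1 \<le> n"
      define k where "k = \<kappa> n"
      have "real n * norm (comp P (fst (gg k) *v x - x)) \<le> real (jj k) * norm (comp P (fst (gg k) *v x - x))"
        using jg(1)[of k] \<kappa>ge[of n] k_def by (intro mult_right_mono) auto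
      also have "\<dots> \<le> M + B0" using compbound \<kappa>K2 k_def by blast
      finally have c1: "norm (comp P (fst (gg k) *v x - x)) \<le> (M + B0) / real n"
        using n by (simp add: pos_le_divide_eq mult.commute)
      have "ginf *v x - x = (fst (gg k) *v x - x) + (ginf *v x - fst (gg k) *v x)" by simp
      then have "comp P (ginf *v x - x) = comp P (fst (gg k) *v x - x) + comp P (ginf *v x - fst (gg k) *v x)"
        using comp_add[OF subP] by metis
      then have c2: "norm (comp P (ginf *v x - x)) \<le> norm (comp P (fst (gg k) *v x - x)) + norm (comp P (ginf *v x - fst (gg k) *v x))"
        by (metis norm_triangle_ineq)
      have c3: "norm (comp P (ginf *v x - fst (gg k) *v x)) \<le> norm (fst (gg k) *v x - ginf *v x)"
        using comp_norm[OF subP] norm_minus_commute by metis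
      show "norm (comp P (ginf *v x - x)) \<le> e n" using c1 c2 c3 e_def k_def by simp
    qed
    then have "norm (comp P (ginf *v x - x)) \<le> 0" using LIMSEQ_le_const[OF elim] by blast
    then show ?thesis by simp
  qed
  have ginfP: "\<forall>u\<in>P. ginf *v u = u" using prop1 ginfThat cPinf P_def by blast
  have tinfO: "orthogonal_matrix tinf" using T_orth tinf(1) by blast
  have glP: "gl *v u \<in> P" if "u \<in> P" for u
  proof -
    have tu: "transpose tinf *v u \<in> P"
      using orth_pres_perp[of "transpose tinf" V u] T_tr[OF tinf(1)] T_orth T_triv that
      unfolding P_def Vperp_def by blast
    have "gl *v u = ginf *v (transpose tinf *v u)"
      using orth_mult_tr[OF tinfO] by (simp add: ginf_def matrix_vector_mul_assoc[symmetric])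
    also have "\<dots> = transpose tinf *v u" using ginfP tu by blast
    finally show ?thesis using tu by simp
  qed
  have gkP: "fst (gg k) *v u \<in> P" if "k \<in> K2" "u \<in> P" for k u
  proof -
    have "fst (gg k) = gl ** fst (dd k)" using dd[OF that(1)] by (simp add: euc_mult_def gl_def)
    moreover have "fst (dd k) *v u \<in> P"
      using orth_pres_perp[of "fst (dd k)" V u] dd[OF that(1)] Sstr T_orth T_triv that(2)
      unfolding P_def Vperp_def by blast
    ultimately show ?thesis using glP by (simp add: matrix_vector_mul_assoc[symmetric])
  qed
  define c where "c n = (\<Sum>i\<in>UNIV. \<Sum>j\<in>UNIV. \<bar>(fst (gg (\<kappa> n)) - ginf) $ i $ j\<bar>)" for n
  have "c \<longlonglongrightarrow> 0" unfolding c_def by (rule tendsto_csum[OF glim])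
  then have "eventually (\<lambda>n. c n < 1 / real r) sequentially" using r1 by (intro order_tendstoD(2)) auto
  then obtain N0 where N0: "\<And>n. n \<ge> N0 \<Longrightarrow> c n < 1 / real r" unfolding eventually_sequentially by blast
  have inG1: "\<forall>u\<in>P. fst (gg (\<kappa> n)) *v u = u" if "n \<ge> N0" for n
  proof
    fix u assume u: "u \<in> P"
    define g where "g = fst (gg (\<kappa> n))"
    have gO: "orthogonal_matrix g" using orthG ggG g_def by blast
    have wP: "g *v u - u \<in> P" using subspace_diff[OF subP gkP[OF \<kappa>K2 u] u] g_def by simp
    have gwP: "g *v (g *v u - u) \<in> P" using gkP[OF \<kappa>K2 wP] g_def by simp
    have "norm (g *v (g *v u - u) - (g *v u - u)) = norm ((g - ginf) *v (g *v u - u))"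
      using ginfP wP by (simp add: matrix_vector_mult_diff_rdistrib)
    also have "\<dots> \<le> c n * norm (g *v u - u)" unfolding c_def g_def by (rule mv_bound)
    finally have cb: "norm (g *v (g *v u - u) - (g *v u - u)) \<le> c n * norm (g *v u - u)" .
    have crr: "c n * real r < 1" using N0[OF that] r1 by (simp add: pos_less_divide_eq)
    have "g *v u = u"
      by (rule FO[OF gO, where G = "\<lambda>i. fst (epow (gg (\<kappa> n)) i)" and r = r and c = "c n"])
         (use fst_epow_0 powid[OF K2K1[OF \<kappa>K2]] r1 cb crr g_def in \<open>auto simp: euc_mult_def\<close>)
    then show "fst (gg (\<kappa> n)) *v u = u" using g_def by simp
  qed
  define l' where "l' = \<kappa> N0"
  have l'K2: "l' \<in> K2" using \<kappa>K2 l'_def by simp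
  define g' where "g' = fst (gg l')"
  define a' where "a' = snd (gg l')"
  have g'O: "orthogonal_matrix g'" using orthG ggG g'_def by blast
  have g'P: "\<forall>u\<in>P. g' *v u = u" using inG1[of N0] l'_def g'_def by simp
  have stepG: "fst (gg k) = g' \<and> comp W1 (snd (gg k)) = comp W1 a'"
    if kK: "k \<in> K2" and kfix: "\<forall>u\<in>P. fst (gg k) *v u = u" for k
  proof -
    obtain \<delta> where d: "\<delta> \<in> S" "gg k = euc_mult (gg l') \<delta>" using coset[OF kK l'K2] by blast
    have dT: "fst \<delta> \<in> T" using Sstr d(1) by blast
    have fk: "fst (gg k) = g' ** fst \<delta>" using d(2) by (simp add: euc_mult_def g'_def)
    have "\<forall>u\<in>P. fst \<delta> *v u = u"
    proof
      fix u assume u: "u \<in> P"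
      have "g' *v (fst \<delta> *v u) = fst (gg k) *v u" using fk by (simp add: matrix_vector_mul_assoc)
      also have "\<dots> = u" using kfix u by blast
      finally have "transpose g' *v (g' *v (fst \<delta> *v u)) = transpose g' *v u" by simp
      then have "fst \<delta> *v u = transpose g' *v u" using orth_tr_mult[OF g'O] by simp
      also have "transpose g' *v u = u" by (metis orth_tr_mult[OF g'O] g'P u)
      finally show "fst \<delta> *v u = u" .
    qed
    then have "fst \<delta> = mat 1" using Tid dT by blast
    then have fk1: "fst (gg k) = g'" using fk by simp
    have "euc_mult (gg k) (euc_inv (gg l')) = euc_mult (euc_mult (gg l') \<delta>) (euc_inv (gg l'))"
      using d by simp
    also have "\<dots> \<in> S" using star_normal ggG d S_def by auto
    finally have eS: "euc_mult (gg k) (euc_inv (gg l')) \<in> S" .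
    have eval: "euc_mult (gg k) (euc_inv (gg l')) = (mat 1, snd (gg k) - a')"
      using fk1 g'O
      by (simp add: euc_mult_def euc_inv_def a'_def g'_def orthogonal_matrix_def mv_neg matrix_vector_mul_assoc)
    have "euc_mult (gg k) (euc_inv (gg l')) \<in> Gamma_sstar \<Gamma> V"
      unfolding Gamma_sstar_def Gamma1_def using eS SG eval S_def by auto
    then have "snd (gg k) - a' \<in> W2" unfolding W2_def V2_def using eval
      by (metis image_eqI snd_conv span_base)
    then have "comp W1 (snd (gg k) - a') = 0" by (rule W2W1)
    then show ?thesis using fk1 comp_diff[OF subW1] by simp
  qed
  have c1z: "comp W1 (g' *v x - x) = 0"
  proof (rule unbounded_zero[where v = "comp W1 a'" and B = M], intro allI)
    fix m
    define n where "n = max m N0"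
    define k where "k = \<kappa> n"
    have kK2: "k \<in> K2" using \<kappa>K2 k_def by simp
    have kP: "\<forall>u\<in>P. fst (gg k) *v u = u" using inG1[of n] n_def k_def by simp
    have sg: "fst (gg k) = g'" "comp W1 (snd (gg k)) = comp W1 a'" using stepG[OF kK2 kP] by auto
    define D where "D = euc_act (gg k) (real (jj k) *\<^sub>R x) - real (jj k) *\<^sub>R x"
    have "comp W1 D = real (jj k) *\<^sub>R comp W1 (g' *v x - x) + comp W1 a'"
      using sg by (simp add: D_def disp_formula comp_add[OF subW1] comp_scale[OF subW1])
    moreover have "norm (comp W1 D) \<le> M"
    proof -
      have "norm D \<le> M" using jg(3)[of k] D_def by simp
      then show ?thesis using comp_norm[OF subW1, of D] by linarith
    qed
    moreover have "jj k \<ge> m" using jg(1)[of k] \<kappa>ge[of n] n_def k_def by auto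
    ultimately show "\<exists>j\<ge>m. norm (real j *\<^sub>R comp W1 (g' *v x - x) + comp W1 a') \<le> M" by metis
  qed
  have c2z: "comp P (g' *v x - x) = 0"
  proof -
    obtain u w where uw: "x = u + w" "u \<in> P" "w \<in> W1" using x_in P_def W1_def by auto
    have "g' *v x - x = g' *v w - w" using uw g'P by (simp add: matrix_vector_right_distrib)
    moreover have "g' *v w \<in> V"
      using orth_fix_perp_pres[OF g'O V_sub] g'P uw W1V unfolding P_def Vperp_def by blast
    moreover have "w \<in> V" using uw W1V by auto
    ultimately have "g' *v x - x \<in> V" using subspace_diff[OF V_sub] by metis
    then show ?thesis by (rule VP)
  qed
  have "g' \<in> That \<Gamma>" using psiG ggG g'_def by blast
  then have "\<forall>v\<in>W1. g' *v v = v" using prop2 c1z c2z unfolding P_def W1_def by blast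
  then have "gg l' \<in> Gamma2 \<Gamma> V" using g'P ggG unfolding Gamma2_def Gamma1_def g'_def P_def W1_def by auto
  then show False using jg(2)[of l'] by blast
qed


theorem lemma3p5:
  fixes \<Gamma> :: "'n::finite euc set" and V :: "(real^'n) set" and T :: "(real^'n^'n) set"
    and x :: "real^'n"
  assumes grp: "euc_subgroup \<Gamma>"
    and disc: "discrete_set \<Gamma>"
    and fpf: "fixed_point_free \<Gamma>"
    \<comment> \<open>V and T as provided by Wolf's theorem\<close>
    and V_sub: "subspace V"
    and T_toral: "toral_subgroup T"
    and T_triv: "\<forall>t\<in>T. \<forall>v\<in>V. t *v v = v"
    and star_sub: "Gamma_star \<Gamma> \<subseteq> {(t, v). t \<in> T \<and> v \<in> V}"
    and star_lattice: "\<exists>L \<phi>. L \<subseteq> V \<and> 0 \<in> L \<and> (\<forall>a\<in>L. \<forall>b\<in>L. a + b \<in> L) \<and>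
         (\<forall>a\<in>L. - a \<in> L) \<and> discrete_set L \<and>
         (\<exists>K. compact K \<and> V \<subseteq> {l + k | l k. l \<in> L \<and> k \<in> K}) \<and>
         bij_betw \<phi> (Gamma_star \<Gamma>) L \<and>
         (\<forall>\<gamma>\<in>Gamma_star \<Gamma>. \<forall>\<delta>\<in>Gamma_star \<Gamma>. \<phi> (euc_mult \<gamma> \<delta>) = \<phi> \<gamma> + \<phi> \<delta>)"
    and star_normal: "\<forall>\<gamma>\<in>\<Gamma>. \<forall>\<delta>\<in>Gamma_star \<Gamma>. euc_mult (euc_mult \<gamma> \<delta>) (euc_inv \<gamma>) \<in> Gamma_star \<Gamma>"
    and star_index: "finite ((\<lambda>\<gamma>. (\<lambda>\<delta>. euc_mult \<gamma> \<delta>) ` Gamma_star \<Gamma>) ` \<Gamma>)"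
    and T_in_That: "T \<subseteq> That \<Gamma>"
    and T_normal: "\<forall>h\<in>That \<Gamma>. \<forall>t\<in>T. h ** t ** transpose h \<in> T"
    and T_index: "finite ((\<lambda>h. (\<lambda>t. h ** t) ` T) ` That \<Gamma>)"
    \<comment> \<open>the point x in V_perp + V_1, so that x~ = (x_perp, x_1, 0) = x\<close>
    and x_in: "x \<in> {u + w | u w. u \<in> Vperp V \<and> w \<in> V1 \<Gamma> V}"
    and prop1: "\<forall>g\<in>That \<Gamma>. comp (Vperp V) (g *v x - x) = 0 \<longrightarrow>
                  (\<forall>v\<in>Vperp V. g *v v = v)"
    and prop2: "\<forall>g\<in>That \<Gamma>. comp (Vperp V) (g *v x - x) = 0 \<and> comp (V1 \<Gamma> V) (g *v x - x) = 0 \<longrightarrow>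
                  (\<forall>v\<in>Vperp V. g *v v = v) \<and> (\<forall>v\<in>V1 \<Gamma> V. g *v v = v)"
  shows "((\<lambda>j::nat. INF \<gamma>\<in>\<Gamma> - Gamma2 \<Gamma> V.
             ereal (norm (euc_act \<gamma> (real j *\<^sub>R x) - real j *\<^sub>R x))) \<longlongrightarrow> \<infinity>) sequentially"
proof -
  have main: "\<forall>M. \<exists>J. \<forall>j\<ge>J. \<forall>\<gamma>\<in>\<Gamma> - Gamma2 \<Gamma> V.
             M < norm (euc_act \<gamma> (real j *\<^sub>R x) - real j *\<^sub>R x)"
    by (rule main_lemma[OF grp disc V_sub T_toral T_triv star_sub star_normal star_index T_in_That x_in prop1 prop2])
  show ?thesis unfolding tendsto_PInfty
  proof
    fix r :: real
    obtain J where J: "\<forall>j\<ge>J. \<forall>\<gamma>\<in>\<Gamma> - Gamma2 \<Gamma> V.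
             r + 1 < norm (euc_act \<gamma> (real j *\<^sub>R x) - real j *\<^sub>R x)" using main by blast
    have "ereal r < (INF \<gamma>\<in>\<Gamma> - Gamma2 \<Gamma> V. ereal (norm (euc_act \<gamma> (real j *\<^sub>R x) - real j *\<^sub>R x)))"
      if "j \<ge> J" for j
    proof -
      have "ereal (r + 1) \<le> (INF \<gamma>\<in>\<Gamma> - Gamma2 \<Gamma> V. ereal (norm (euc_act \<gamma> (real j *\<^sub>R x) - real j *\<^sub>R x)))"
        using J that by (intro INF_greatest) (auto intro: less_imp_le)
      moreover have "ereal r < ereal (r + 1)" by simp
      ultimately show ?thesis by (rule less_le_trans[rotated])
    qed
    then show "eventually (\<lambda>j. ereal r < (INF \<gamma>\<in>\<Gamma> - Gamma2 \<Gamma> V. ereal (norm (euc_act \<gamma> (real j *\<^sub>R x) - real j *\<^sub>R x)))) sequentially"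
      unfolding eventually_sequentially by blast
  qed
qed


end
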